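(* $i(\vec P_3)\geq \frac{2}{5}$ and $i(\vec C_4)\geq \frac{2}{21}$.
   Context: An orgraph (oriented graph) is a directed graph with no loops, no multiple edges, and no pair of vertices joined by edges in both directions. For a finite orgraph $\Gamma$ and an integer $n$, let $max(\Gamma;n)$ be the maximum, over all orgraphs $G$ on $n$ vertices, of the number of vertex subsets $T\subseteq V(G)$ with $|T|=|V(\Gamma)|$ such that the subgraph of $G$ induced by $T$ is isomorphic to $\Gamma$ (each such set is counted once, regardless of automorphisms of $\Gamma$). The inducibility of $\Gamma$ is $i(\Gamma):=\limsup_{n\to\infty} max(\Gamma;n)/\binom{n}{|V(\Gamma)|}$. Here $\vec P_3$ is the orgraph on vertices $a,b,c$ with edges $a\to b$ and $b\to c$ only (directed path with 3 vertices), and $\vec C_4$ is the orgraph on vertices $v_1,v_2,v_3,v_4$ with edges $v_1\to v_2$, $v_2\to v_3$, $v_3\to v_4$, $v_4\to v_1$ only (directed 4-cycle). *)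

theory Defs
  imports Complex_Main "HOL-Library.Liminf_Limsup" "HOL-Library.Extended_Real"
begin

definition orgraph :: "nat \<Rightarrow> (nat \<Rightarrow> nat \<Rightarrow> bool) \<Rightarrow> bool" where
  "orgraph n E \<longleftrightarrow> (\<forall>u<n. \<not> E u u) \<and> (\<forall>u<n. \<forall>v<n. E u v \<longrightarrow> \<not> E v u)"

definition induced_iso :: "nat \<Rightarrow> (nat \<Rightarrow> nat \<Rightarrow> bool) \<Rightarrow> (nat \<Rightarrow> nat \<Rightarrow> bool) \<Rightarrow> nat set \<Rightarrow> bool" where
  "induced_iso k F E T \<longleftrightarrow>
     (\<exists>f. bij_betw f {0..<k} T \<and> (\<forall>i<k. \<forall>j<k. F i j \<longleftrightarrow> E (f i) (f j)))"

definition induced_count :: "nat \<Rightarrow> (nat \<Rightarrow> nat \<Rightarrow> bool) \<Rightarrow> nat \<Rightarrow> (nat \<Rightarrow> nat \<Rightarrow> bool) \<Rightarrow> nat" where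
  "induced_count k F n E = card {T. T \<subseteq> {0..<n} \<and> card T = k \<and> induced_iso k F E T}"

definition max_induced :: "nat \<Rightarrow> (nat \<Rightarrow> nat \<Rightarrow> bool) \<Rightarrow> nat \<Rightarrow> nat" where
  "max_induced k F n = Max {induced_count k F n E | E. orgraph n E}"

definition inducibility :: "nat \<Rightarrow> (nat \<Rightarrow> nat \<Rightarrow> bool) \<Rightarrow> ereal" where
  "inducibility k F = limsup (\<lambda>n. ereal (real (max_induced k F n) / real (n choose k)))"

definition P3 :: "nat \<Rightarrow> nat \<Rightarrow> bool" where
  "P3 i j \<longleftrightarrow> (i = 0 \<and> j = 1) \<or> (i = 1 \<and> j = 2)"

definition C4 :: "nat \<Rightarrow> nat \<Rightarrow> bool" where
  "C4 i j \<longleftrightarrow> i < 4 \<and> j = (i + 1) mod 4"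

end

theory Submission
  imports Defs
begin

function itE :: "nat \<Rightarrow> nat \<Rightarrow> bool" where
  "itE u v = (if u = v then False else if u mod 4 = v mod 4 then itE (u div 4) (v div 4)
              else v mod 4 = (u mod 4 + 1) mod 4)"
  by auto
termination
  by (relation "measure (\<lambda>(u,v). u+v)") auto

declare itE.simps[simp del]

lemma mod4_cases: "(n::nat) mod 4 = 0 \<or> n mod 4 = 1 \<or> n mod 4 = 2 \<or> n mod 4 = 3"
  by presburger

lemma itE_irrefl: "\<not> itE u u"
  by (simp add: itE.simps)

lemma itE_antisym: "itE u v \<Longrightarrow> \<not> itE v u"
proof (induction u v rule: itE.induct)
  case (1 u v)
  show ?case
  proof (cases "u = v")
    case True then show ?thesis using 1 by (simp add: itE.simps)
  next
    case False
    show ?thesis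
    proof (cases "u mod 4 = v mod 4")
      case True
      then show ?thesis using 1 False by (simp add: itE.simps)
    next
      case F2: False
      have a: "v mod 4 = (u mod 4 + 1) mod 4" using 1(2) False F2 by (simp add: itE.simps)
      have "u mod 4 \<noteq> (v mod 4 + 1) mod 4" unfolding a using mod4_cases[of u] by auto
      then show ?thesis using False F2 by (simp add: itE.simps)
    qed
  qed
qed

lemma lt4: "(p::nat) < 4 \<Longrightarrow> p = 0 \<or> p = 1 \<or> p = 2 \<or> p = 3" by auto
lemma lt3: "(p::nat) < 3 \<Longrightarrow> p = 0 \<or> p = 1 \<or> p = 2" by auto
lemma modA0: assumes "(r::nat) < 4" "p < 4" "q < 4" "(r+p) mod 4 = (r+q) mod 4" shows "p = q"
  using lt4[OF assms(1)] lt4[OF assms(2)] lt4[OF assms(3)] assms(4) by (elim disjE) simp_all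
lemma modB0: assumes "(r::nat) < 4" "p < 3" "q < 3" shows "((r+q) mod 4 = ((r+p) mod 4 + 1) mod 4) = (q = p + 1)"
  using lt4[OF assms(1)] lt3[OF assms(2)] lt3[OF assms(3)] by (elim disjE) simp_all
lemma modA: "(p::nat) < 4 \<Longrightarrow> q < 4 \<Longrightarrow> (i+p) mod 4 = (i+q) mod 4 \<Longrightarrow> p = q"
  by (rule modA0[of "i mod 4"]) (simp_all add: mod_add_left_eq)
lemma modB: "(p::nat) < 3 \<Longrightarrow> q < 3 \<Longrightarrow> ((i+q) mod 4 = ((i+p) mod 4 + 1) mod 4) = (q = p + 1)"
  using modB0[of "i mod 4" p q] by (simp add: mod_add_left_eq)

lemma itE_orgraph: "orgraph n itE"
  unfolding orgraph_def using itE_irrefl itE_antisym by blast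

lemma itE_same: "i < 4 \<Longrightarrow> itE (4*x+i) (4*y+i) = itE x y"
  by (subst itE.simps) (auto simp: itE_irrefl)

lemma itE_diff: "x mod 4 \<noteq> y mod 4 \<Longrightarrow> itE x y = (y mod 4 = (x mod 4 + 1) mod 4)"
  by (subst itE.simps) auto

definition sh :: "nat \<Rightarrow> nat set \<Rightarrow> nat set" where
  "sh i T = (\<lambda>x. 4*x+i) ` T"

definition Lift :: "nat set set \<Rightarrow> nat set set" where
  "Lift F = (\<Union>i\<in>{0..<4}. sh i ` F)"

lemma sh_inj: "inj_on (sh i) F"
proof -
  have "inj_on (\<lambda>x::nat. 4*x+i) (\<Union>F)" by (auto simp: inj_on_def)
  then show ?thesis unfolding sh_def by (rule inj_on_image)
qed

lemma Lift_card:
  assumes "finite F" "\<forall>T\<in>F. T \<noteq> {}"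
  shows "card (Lift F) = 4 * card F"
proof -
  have "card (Lift F) = (\<Sum>i\<in>{0..<4}. card (sh i ` F))"
    unfolding Lift_def
  proof (rule card_UN_disjoint)
    show "\<forall>i\<in>{0..<4::nat}. \<forall>j\<in>{0..<4}. i \<noteq> j \<longrightarrow> sh i ` F \<inter> sh j ` F = {}"
    proof (intro ballI impI)
      fix i j :: nat assume ij: "i \<in> {0..<4}" "j \<in> {0..<4}" "i \<noteq> j"
      show "sh i ` F \<inter> sh j ` F = {}"
      proof (rule ccontr)
        assume "sh i ` F \<inter> sh j ` F \<noteq> {}"
        then obtain T T' where TT: "T \<in> F" "T' \<in> F" "sh i T = sh j T'" by blast
        then obtain x where "x \<in> T" using assms by blast
        then have "4*x+i \<in> sh j T'" using TT unfolding sh_def by blast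
        then obtain y where "4*x+i = 4*y+j" unfolding sh_def by blast
        then have "(4*x+i) mod 4 = (4*y+j) mod 4" by simp
        then show False using ij by simp
      qed
    qed
  qed (use assms in auto)
  also have "\<dots> = 4 * card F" using sh_inj by (simp add: card_image)
  finally show ?thesis .
qed

lemma Lift_elem: "S \<in> Lift F \<Longrightarrow> \<exists>i<4. \<exists>T\<in>F. S = sh i T"
  unfolding Lift_def by auto

lemma Lift_res: "S \<in> Lift F \<Longrightarrow> \<exists>i. \<forall>x\<in>S. x mod 4 = i"
  unfolding Lift_def sh_def by auto

lemma iso_sh:
  assumes "induced_iso k G itE T" "i < 4"
  shows "induced_iso k G itE (sh i T)"
proof -
  obtain f where f: "bij_betw f {0..<k} T" "\<forall>p<k. \<forall>q<k. G p q \<longleftrightarrow> itE (f p) (f q)"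
    using assms(1) unfolding induced_iso_def by blast
  have b: "bij_betw (\<lambda>x::nat. 4*x+i) T (sh i T)"
    unfolding sh_def by (rule bij_betw_imageI) (auto simp: inj_on_def)
  have "bij_betw ((\<lambda>x::nat. 4*x+i) \<circ> f) {0..<k} (sh i T)"
    using f(1) b by (rule bij_betw_trans)
  moreover have "\<forall>p<k. \<forall>q<k. G p q \<longleftrightarrow> itE (((\<lambda>x::nat. 4*x+i) \<circ> f) p) (((\<lambda>x::nat. 4*x+i) \<circ> f) q)"
    using f(2) itE_same[OF assms(2)] by simp
  ultimately show ?thesis unfolding induced_iso_def by blast
qed

lemma Lift_good:
  assumes "\<forall>T\<in>F. T \<subseteq> {0..<N} \<and> card T = k \<and> induced_iso k G itE T"
  shows "\<forall>S\<in>Lift F. S \<subseteq> {0..<4*N} \<and> card S = k \<and> induced_iso k G itE S"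
proof
  fix S assume "S \<in> Lift F"
  then obtain i T where iT: "i < 4" "T \<in> F" "S = sh i T" using Lift_elem by blast
  have "S \<subseteq> {0..<4*N}"
  proof
    fix y assume "y \<in> S"
    then obtain x where "x \<in> T" "y = 4*x+i" using iT unfolding sh_def by blast
    moreover have "T \<subseteq> {0..<N}" using assms iT(2) by blast
    then have "x < N" using \<open>x \<in> T\<close> by auto
    ultimately show "y \<in> {0..<4*N}" using iT by auto
  qed
  moreover have "card T = k" using assms iT(2) by blast
  moreover have "card S = card T" using iT unfolding sh_def
    by (simp add: card_image inj_on_def)
  moreover have "induced_iso k G itE T" using assms iT(2) by blast
  then have "induced_iso k G itE S" using iT iso_sh by blast
  ultimately show "S \<subseteq> {0..<4*N} \<and> card S = k \<and> induced_iso k G itE S" by blast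
qed

section \<open>Path P3\<close>

definition tripP :: "nat \<Rightarrow> nat \<Rightarrow> nat \<Rightarrow> nat \<Rightarrow> nat set" where
  "tripP i a b c = {4*a+i, 4*b+(i+1) mod 4, 4*c+(i+2) mod 4}"

definition BP :: "nat \<Rightarrow> nat set set" where
  "BP N = (\<Union>i\<in>{0..<4}. (\<lambda>(a,b,c). tripP i a b c) ` ({0..<N}\<times>{0..<N}\<times>{0..<N}))"

lemma tripP_res: "i < 4 \<Longrightarrow> (\<lambda>x. x mod 4) ` tripP i a b c = {i, (i+1) mod 4, (i+2) mod 4}"
  unfolding tripP_def by auto

lemma res4: "(4*b + r) mod 4 = r mod (4::nat)" by simp
lemma res4': "(4*b + r mod 4) mod 4 = r mod (4::nat)" by simp
lemma ne1: "(i::nat) < 4 \<Longrightarrow> (i+1) mod 4 \<noteq> i" by presburger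
lemma ne2: "(i::nat) < 4 \<Longrightarrow> (i+2) mod 4 \<noteq> i" by presburger
lemma ne3: "(i::nat) < 4 \<Longrightarrow> (i+2) mod 4 \<noteq> (i+1) mod 4" by presburger

lemma tripP_cases: "x \<in> tripP i a b c \<Longrightarrow> x = 4*a+i \<or> x = 4*b+(i+1) mod 4 \<or> x = 4*c+(i+2) mod 4"
  unfolding tripP_def by blast

lemma tripP_i: assumes "i < 4" "x \<in> tripP i a b c" "x mod 4 = i" shows "x = 4*a+i"
proof -
  have m1: "(4*b+(i+1) mod 4) mod 4 = (i+1) mod 4" by (rule res4')
  have m2: "(4*c+(i+2) mod 4) mod 4 = (i+2) mod 4" by (rule res4')
  show ?thesis using tripP_cases[OF assms(2)] assms(3) m1 m2 ne1[OF assms(1)] ne2[OF assms(1)] by metis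
qed

lemma tripP_i1: assumes "i < 4" "x \<in> tripP i a b c" "x mod 4 = (i+1) mod 4" shows "x = 4*b+(i+1) mod 4"
proof -
  have m0: "(4*a+i) mod 4 = i" using assms(1) res4[of a i] by simp
  have m2: "(4*c+(i+2) mod 4) mod 4 = (i+2) mod 4" by (rule res4')
  show ?thesis using tripP_cases[OF assms(2)] assms(3) m0 m2 ne1[OF assms(1)] ne3[OF assms(1)] by metis
qed

lemma tripP_i2: assumes "i < 4" "x \<in> tripP i a b c" "x mod 4 = (i+2) mod 4" shows "x = 4*c+(i+2) mod 4"
proof -
  have m0: "(4*a+i) mod 4 = i" using assms(1) res4[of a i] by simp
  have m1: "(4*b+(i+1) mod 4) mod 4 = (i+1) mod 4" by (rule res4')
  show ?thesis using tripP_cases[OF assms(2)] assms(3) m0 m1 ne2[OF assms(1)] ne3[OF assms(1)] by metis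
qed

lemma tripP_inj: "inj_on (\<lambda>(a,b,c). tripP i a b c) A" if "i < 4"
proof (rule inj_onI)
  fix x y assume "x \<in> A" "y \<in> A" and eq0: "(\<lambda>(a,b,c). tripP i a b c) x = (\<lambda>(a,b,c). tripP i a b c) y"
  obtain a b c where x: "x = (a,b,c)" by (cases x) auto
  obtain a' b' c' where y: "y = (a',b',c')" by (cases y) auto
  have eq: "tripP i a b c = tripP i a' b' c'" using eq0 x y by simp
  have "4*a+i \<in> tripP i a' b' c'" using eq unfolding tripP_def by blast
  then have "4*a+i = 4*a'+i" using tripP_i[OF that, of "4*a+i" a' b' c'] that by simp
  moreover have "4*b+(i+1) mod 4 \<in> tripP i a' b' c'" using eq unfolding tripP_def by blast
  then have "4*b+(i+1) mod 4 = 4*b'+(i+1) mod 4" using tripP_i1[OF that, of "4*b+(i+1) mod 4" a' b' c'] that by simp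
  moreover have "4*c+(i+2) mod 4 \<in> tripP i a' b' c'" using eq unfolding tripP_def by blast
  then have "4*c+(i+2) mod 4 = 4*c'+(i+2) mod 4" using tripP_i2[OF that, of "4*c+(i+2) mod 4" a' b' c'] that by simp
  ultimately show "x = y" using x y by simp
qed

lemma BP_card: "card (BP N) = 4 * N^3"
proof -
  have "card (BP N) = (\<Sum>i\<in>{0..<4}. card ((\<lambda>(a,b,c). tripP i a b c) ` ({0..<N}\<times>{0..<N}\<times>{0..<N})))"
    unfolding BP_def
  proof (rule card_UN_disjoint)
    show "\<forall>i\<in>{0..<4::nat}. \<forall>j\<in>{0..<4}. i \<noteq> j \<longrightarrow>
      (\<lambda>(a,b,c). tripP i a b c) ` ({0..<N}\<times>{0..<N}\<times>{0..<N}) \<inter> (\<lambda>(a,b,c). tripP j a b c) ` ({0..<N}\<times>{0..<N}\<times>{0..<N}) = {}"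
    proof (intro ballI impI)
      fix i j :: nat assume ij: "i \<in> {0..<4}" "j \<in> {0..<4}" "i \<noteq> j"
      show "(\<lambda>(a,b,c). tripP i a b c) ` ({0..<N}\<times>{0..<N}\<times>{0..<N}) \<inter> (\<lambda>(a,b,c). tripP j a b c) ` ({0..<N}\<times>{0..<N}\<times>{0..<N}) = {}"
      proof (rule ccontr)
        assume "\<not> ?thesis"
        then obtain a b c a' b' c' where "tripP i a b c = tripP j a' b' c'" by auto
        then have "(\<lambda>x. x mod 4) ` tripP i a b c = (\<lambda>x. x mod 4) ` tripP j a' b' c'" by simp
        then have "{i, (i+1) mod 4, (i+2) mod 4} = {j, (j+1) mod 4, (j+2) mod 4}"
          using ij by (simp add: tripP_res)
        moreover have "(i+3) mod 4 \<notin> {i, (i+1) mod 4, (i+2) mod 4}"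
          using lt4[of i] ij(1) by (simp, elim disjE, simp_all)
        moreover have "(i+3) mod 4 \<in> {j, (j+1) mod 4, (j+2) mod 4}"
          using lt4[of i] lt4[of j] ij by (simp, elim disjE, simp_all)
        ultimately show False by simp
      qed
    qed
  qed auto
  also have "\<dots> = (\<Sum>i\<in>{0..<4::nat}. N^3)"
    by (rule sum.cong) (auto simp: card_image tripP_inj card_cartesian_product power3_eq_cube)
  finally show ?thesis by simp
qed

lemma tripP_good:
  assumes "i < 4" "a < N" "b < N" "c < N"
  shows "tripP i a b c \<subseteq> {0..<4*N} \<and> card (tripP i a b c) = 3 \<and> induced_iso 3 P3 itE (tripP i a b c)"
proof -
  define f where "f = (\<lambda>p::nat. if p = 0 then 4*a+i else if p = 1 then 4*b+(i+1) mod 4 else 4*c+(i+2) mod 4)"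
  have fres: "f p mod 4 = (i+p) mod 4" if "p < 3" for p
    using that assms(1) unfolding f_def by (auto simp: less_Suc_eq numeral_3_eq_3)
  have inj: "inj_on f {0..<3}"
  proof (rule inj_onI)
    fix p q assume pq: "p \<in> {0..<3}" "q \<in> {0..<3}" "f p = f q"
    then have "(i+p) mod 4 = (i+q) mod 4" using fres by (metis atLeastLessThan_iff)
    then show "p = q" using pq(1,2) modA[of p q i] by simp
  qed
  have img: "f ` {0..<3} = tripP i a b c"
    unfolding f_def tripP_def by (auto simp: numeral_3_eq_3 atLeast0_lessThan_Suc)
  have bij: "bij_betw f {0..<3} (tripP i a b c)"
    using inj img by (simp add: bij_betw_def)
  have edges: "\<forall>p<3. \<forall>q<3. P3 p q \<longleftrightarrow> itE (f p) (f q)"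
  proof (intro allI impI)
    fix p q :: nat assume pq: "p < 3" "q < 3"
    show "P3 p q \<longleftrightarrow> itE (f p) (f q)"
    proof (cases "p = q")
      case True then show ?thesis by (auto simp add: itE_irrefl P3_def)
    next
      case False
      then have ne: "(i+p) mod 4 \<noteq> (i+q) mod 4" using pq modA[of p q i] by auto
      have fp: "f p mod 4 = (i+p) mod 4" using fres pq(1) .
      have fq: "f q mod 4 = (i+q) mod 4" using fres pq(2) .
      have "itE (f p) (f q) = (f q mod 4 = (f p mod 4 + 1) mod 4)"
        using itE_diff[of "f p" "f q"] ne fp fq by simp
      also have "\<dots> = ((i+q) mod 4 = ((i+p) mod 4 + 1) mod 4)" by (simp only: fp fq)
      also have "\<dots> = (q = p + 1)" by (rule modB[OF pq])
      also have "\<dots> = P3 p q" using lt3[OF pq(1)] lt3[OF pq(2)] False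
        by (elim disjE) (simp_all add: P3_def)
      finally show ?thesis by simp
    qed
  qed
  have "induced_iso 3 P3 itE (tripP i a b c)"
    unfolding induced_iso_def using bij edges by blast
  moreover have "card (tripP i a b c) = 3"
    using bij_betw_same_card[OF bij] by simp
  moreover have "tripP i a b c \<subseteq> {0..<4*N}"
    using assms unfolding tripP_def by auto
  ultimately show ?thesis by blast
qed

fun FP :: "nat \<Rightarrow> nat set set" where
  "FP 0 = {}"
| "FP (Suc j) = Lift (FP j) \<union> BP (4^j)"

fun cP :: "nat \<Rightarrow> nat" where
  "cP 0 = 0"
| "cP (Suc j) = 4 * cP j + 4 * (4^j)^3"

lemma FP_good: "\<forall>T\<in>FP j. T \<subseteq> {0..<4^j} \<and> card T = 3 \<and> induced_iso 3 P3 itE T"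
proof (induction j)
  case 0 then show ?case by simp
next
  case (Suc j)
  have "\<forall>S\<in>Lift (FP j). S \<subseteq> {0..<4*4^j} \<and> card S = 3 \<and> induced_iso 3 P3 itE S"
    using Lift_good[OF Suc.IH] .
  moreover have "\<forall>S\<in>BP (4^j). S \<subseteq> {0..<4*4^j} \<and> card S = 3 \<and> induced_iso 3 P3 itE S"
    unfolding BP_def using tripP_good by auto
  ultimately show ?case by auto
qed

lemma FP_finite: "finite (FP j)"
proof -
  have "FP j \<subseteq> Pow {0..<4^j}" using FP_good[of j] by auto
  then show ?thesis by (rule finite_subset) simp
qed

lemma FP_card: "card (FP j) = cP j"
proof (induction j)
  case 0 then show ?case by simp
next
  case (Suc j)
  have ne: "\<forall>T\<in>FP j. T \<noteq> {}" using FP_good[of j] by auto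
  have fin: "finite (Lift (FP j))" "finite (BP (4^j))"
    using FP_finite[of j] unfolding Lift_def BP_def by auto
  have disj: "Lift (FP j) \<inter> BP (4^j) = {}"
  proof (rule ccontr)
    assume "Lift (FP j) \<inter> BP (4^j) \<noteq> {}"
    then obtain S where S: "S \<in> Lift (FP j)" "S \<in> BP (4^j)" by blast
    obtain r where r: "\<forall>x\<in>S. x mod 4 = r" using Lift_res[OF S(1)] by blast
    obtain i a b c where "i < 4" "S = tripP i a b c" using S(2) unfolding BP_def by auto
    then have "(4*a+i) mod 4 = r" "(4*b+(i+1) mod 4) mod 4 = r" using r unfolding tripP_def by auto
    then show False using \<open>i < 4\<close> mod4_cases[of i] by auto
  qed
  have "card (FP (Suc j)) = card (Lift (FP j)) + card (BP (4^j))"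
    using card_Un_disjoint[OF fin disj] by simp
  also have "\<dots> = 4 * cP j + 4 * (4^j)^3"
    using Lift_card[OF FP_finite ne] Suc.IH BP_card by simp
  finally show ?case by simp
qed

lemma cP_formula: "15 * cP j + 4^j = (4^j)^3"
proof (induction j)
  case 0 then show ?case by simp
next
  case (Suc j)
  have "15 * cP (Suc j) + 4^Suc j = 4 * (15 * cP j + 4^j) + 60 * (4^j)^3" by simp
  also have "\<dots> = 64 * (4^j)^3" using Suc.IH by simp
  also have "\<dots> = (4^Suc j)^3" by (simp add: power_mult_distrib)
  finally show ?case .
qed

section \<open>Cycle C4\<close>

definition tripC :: "nat \<Rightarrow> nat \<Rightarrow> nat \<Rightarrow> nat \<Rightarrow> nat set" where
  "tripC a b c d = {4*a, 4*b+1, 4*c+2, 4*d+3}"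

definition BC :: "nat \<Rightarrow> nat set set" where
  "BC N = (\<lambda>(a,b,c,d). tripC a b c d) ` ({0..<N}\<times>{0..<N}\<times>{0..<N}\<times>{0..<N})"

lemma tripC_r: "x \<in> tripC a b c d \<Longrightarrow> x mod 4 = r \<Longrightarrow> r < 4 \<Longrightarrow> x = 4 * [a,b,c,d] ! r + r"
proof -
  assume a: "x \<in> tripC a b c d" "x mod 4 = r" "r < 4"
  have "x = 4*a \<or> x = 4*b+1 \<or> x = 4*c+2 \<or> x = 4*d+3" using a(1) unfolding tripC_def by blast
  moreover have "(4*a) mod 4 = (0::nat)" "(4*b+1) mod 4 = (1::nat)" "(4*c+2) mod 4 = (2::nat)" "(4*d+3) mod 4 = (3::nat)"
    by presburger+
  ultimately show ?thesis using a(2) by auto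
qed

lemma tripC_inj: "inj_on (\<lambda>(a,b,c,d). tripC a b c d) A"
proof (rule inj_onI)
  fix x y assume "x \<in> A" "y \<in> A" and eq0: "(\<lambda>(a,b,c,d). tripC a b c d) x = (\<lambda>(a,b,c,d). tripC a b c d) y"
  obtain a b c d where x: "x = (a,b,c,d)" by (cases x) auto
  obtain a' b' c' d' where y: "y = (a',b',c',d')" by (cases y) auto
  have eq: "tripC a b c d = tripC a' b' c' d'" using eq0 x y by simp
  have m0: "4*a \<in> tripC a' b' c' d'" using eq unfolding tripC_def by blast
  have r0: "(4*a) mod 4 = (0::nat)" by presburger
  have e0: "4*a = 4*a'" using tripC_r[OF m0 r0] by simp
  have m1: "4*b+1 \<in> tripC a' b' c' d'" using eq unfolding tripC_def by blast
  have r1: "(4*b+1) mod 4 = (1::nat)" by presburger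
  have e1: "4*b+1 = 4*b'+1" using tripC_r[OF m1 r1] by simp
  have m2: "4*c+2 \<in> tripC a' b' c' d'" using eq unfolding tripC_def by blast
  have r2: "(4*c+2) mod 4 = (2::nat)" by presburger
  have e2: "4*c+2 = 4*c'+2" using tripC_r[OF m2 r2] by simp
  have m3: "4*d+3 \<in> tripC a' b' c' d'" using eq unfolding tripC_def by blast
  have r3: "(4*d+3) mod 4 = (3::nat)" by presburger
  have e3: "4*d+3 = 4*d'+3" using tripC_r[OF m3 r3] by simp
  show "x = y" using x y e0 e1 e2 e3 by simp
qed

lemma BC_card: "card (BC N) = N^4"
  unfolding BC_def by (simp add: card_image tripC_inj card_cartesian_product power4_eq_xxxx)

lemma tripC_good:
  assumes "a < N" "b < N" "c < N" "d < N"
  shows "tripC a b c d \<subseteq> {0..<4*N} \<and> card (tripC a b c d) = 4 \<and> induced_iso 4 C4 itE (tripC a b c d)"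
proof -
  define f where "f = (\<lambda>p::nat. 4 * [a,b,c,d] ! p + p)"
  have fres: "f p mod 4 = p" if "p < 4" for p
    using that unfolding f_def by simp
  have inj: "inj_on f {0..<4}"
  proof (rule inj_onI)
    fix p q assume pq: "p \<in> {0..<4}" "q \<in> {0..<4}" "f p = f q"
    then show "p = q" using fres by (metis atLeastLessThan_iff)
  qed
  have img: "f ` {0..<4} = tripC a b c d"
  proof -
    have "{0..<4::nat} = {0,1,2,3}" by auto
    then show ?thesis unfolding f_def tripC_def by simp
  qed
  have bij: "bij_betw f {0..<4} (tripC a b c d)"
    using inj img by (simp add: bij_betw_def)
  have edges: "\<forall>p<4. \<forall>q<4. C4 p q \<longleftrightarrow> itE (f p) (f q)"
  proof (intro allI impI)
    fix p q :: nat assume pq: "p < 4" "q < 4"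
    show "C4 p q \<longleftrightarrow> itE (f p) (f q)"
    proof (cases "p = q")
      case True then show ?thesis using lt4[OF pq(1)] by (elim disjE) (simp_all add: itE_irrefl C4_def)
    next
      case False
      have fp: "f p mod 4 = p" using fres pq(1) .
      have fq: "f q mod 4 = q" using fres pq(2) .
      have "itE (f p) (f q) = (f q mod 4 = (f p mod 4 + 1) mod 4)"
        using itE_diff[of "f p" "f q"] False fp fq by simp
      also have "\<dots> = (q = (p + 1) mod 4)" by (simp only: fp fq)
      finally show ?thesis using pq by (simp add: C4_def)
    qed
  qed
  have "induced_iso 4 C4 itE (tripC a b c d)"
    unfolding induced_iso_def using bij edges by blast
  moreover have "card (tripC a b c d) = 4"
    using bij_betw_same_card[OF bij] by simp
  moreover have "tripC a b c d \<subseteq> {0..<4*N}"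
    using assms unfolding tripC_def by auto
  ultimately show ?thesis by blast
qed

fun FC :: "nat \<Rightarrow> nat set set" where
  "FC 0 = {}"
| "FC (Suc j) = Lift (FC j) \<union> BC (4^j)"

fun cC :: "nat \<Rightarrow> nat" where
  "cC 0 = 0"
| "cC (Suc j) = 4 * cC j + (4^j)^4"

lemma FC_good: "\<forall>T\<in>FC j. T \<subseteq> {0..<4^j} \<and> card T = 4 \<and> induced_iso 4 C4 itE T"
proof (induction j)
  case 0 then show ?case by simp
next
  case (Suc j)
  have "\<forall>S\<in>Lift (FC j). S \<subseteq> {0..<4*4^j} \<and> card S = 4 \<and> induced_iso 4 C4 itE S"
    using Lift_good[OF Suc.IH] .
  moreover have "\<forall>S\<in>BC (4^j). S \<subseteq> {0..<4*4^j} \<and> card S = 4 \<and> induced_iso 4 C4 itE S"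
    unfolding BC_def using tripC_good by auto
  ultimately show ?case by auto
qed

lemma FC_finite: "finite (FC j)"
proof -
  have "FC j \<subseteq> Pow {0..<4^j}" using FC_good[of j] by auto
  then show ?thesis by (rule finite_subset) simp
qed

lemma FC_card: "card (FC j) = cC j"
proof (induction j)
  case 0 then show ?case by simp
next
  case (Suc j)
  have ne: "\<forall>T\<in>FC j. T \<noteq> {}" using FC_good[of j] by auto
  have fin: "finite (Lift (FC j))" "finite (BC (4^j))"
    using FC_finite[of j] unfolding Lift_def BC_def by auto
  have disj: "Lift (FC j) \<inter> BC (4^j) = {}"
  proof (rule ccontr)
    assume "Lift (FC j) \<inter> BC (4^j) \<noteq> {}"
    then obtain S where S: "S \<in> Lift (FC j)" "S \<in> BC (4^j)" by blast
    obtain r where r: "\<forall>x\<in>S. x mod 4 = r" using Lift_res[OF S(1)] by blast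
    obtain a b c d where "S = tripC a b c d" using S(2) unfolding BC_def by auto
    then have "(4*a) mod 4 = r" "(4*b+1) mod 4 = r" using r unfolding tripC_def by auto
    then show False by simp
  qed
  have "card (FC (Suc j)) = card (Lift (FC j)) + card (BC (4^j))"
    using card_Un_disjoint[OF fin disj] by simp
  also have "\<dots> = 4 * cC j + (4^j)^4"
    using Lift_card[OF FC_finite ne] Suc.IH BC_card by simp
  finally show ?case by simp
qed

lemma cC_formula: "252 * cC j + 4^j = (4^j)^4"
proof (induction j)
  case 0 then show ?case by simp
next
  case (Suc j)
  have "252 * cC (Suc j) + 4^Suc j = 4 * (252 * cC j + 4^j) + 252 * (4^j)^4" by simp
  also have "\<dots> = 256 * (4^j)^4" using Suc.IH by simp
  also have "\<dots> = (4^Suc j)^4" by (simp add: power_mult_distrib)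
  finally show ?case .
qed


lemma count_le_max:
  assumes "orgraph n E"
  shows "induced_count k F n E \<le> max_induced k F n"
proof -
  have bound: "induced_count k F n E' \<le> n choose k" for E'
  proof -
    have "induced_count k F n E' \<le> card {T. T \<subseteq> {0..<n} \<and> card T = k}"
      unfolding induced_count_def
      by (rule card_mono) (auto intro: finite_subset[of _ "Pow {0..<n}"])
    also have "\<dots> = n choose k" using n_subsets[of "{0..<n}" k] by simp
    finally show ?thesis .
  qed
  have fin: "finite {induced_count k F n E | E. orgraph n E}"
    by (rule finite_subset[of _ "{..n choose k}"]) (use bound in auto)
  show ?thesis unfolding max_induced_def
    by (rule Max_ge[OF fin]) (use assms in blast)
qed

lemma FP_le_count: "card (FP j) \<le> induced_count 3 P3 (4^j) itE"
  unfolding induced_count_def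
  by (rule card_mono) (use FP_good[of j] in \<open>auto intro: finite_subset[of _ "Pow {0..<4^j}"]\<close>)

lemma FC_le_count: "card (FC j) \<le> induced_count 4 C4 (4^j) itE"
  unfolding induced_count_def
  by (rule card_mono) (use FC_good[of j] in \<open>auto intro: finite_subset[of _ "Pow {0..<4^j}"]\<close>)

lemma ch3: "real (n choose 3) * 6 = real n * (real n - 1) * (real n - 2)"
proof -
  have "real (n choose 3) * fact 3 = (\<Prod>i = 0..<3. real n - of_nat i)"
    unfolding binomial_gbinomial by (rule gbinomial_mult_fact')
  then show ?thesis by (simp add: numeral_3_eq_3 fact_numeral)
qed

lemma ch4: "real (n choose 4) * 24 = real n * (real n - 1) * (real n - 2) * (real n - 3)"
proof -
  have "real (n choose 4) * fact 4 = (\<Prod>i = 0..<4. real n - of_nat i)"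
    unfolding binomial_gbinomial by (rule gbinomial_mult_fact')
  then show ?thesis by (simp add: numeral_eq_Suc fact_numeral mult.assoc)
qed

lemma ratioP: "ereal (2/5) \<le> ereal (real (max_induced 3 P3 (4^Suc j)) / real ((4^Suc j) choose 3))"
proof -
  define N where "N = (4::nat)^Suc j"
  have N4: "real N \<ge> 4" unfolding N_def by (simp add: one_le_power)
  have c: "15 * real (cP (Suc j)) + real N = real N ^ 3"
    using arg_cong[OF cP_formula[of "Suc j"], of real] unfolding N_def by simp
  have C: "real (N choose 3) * 6 = real N * (real N - 1) * (real N - 2)" by (rule ch3)
  have Cpos: "real (N choose 3) > 0" using C N4 by (smt (verit) mult_pos_pos)
  have key: "real N ^ 3 - real N - real N * (real N - 1) * (real N - 2) = 3 * real N * (real N - 1)"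
    by (simp add: algebra_simps power3_eq_cube)
  have "3 * real N * (real N - 1) \<ge> 0" using N4 by simp
  then have "2/5 * real (N choose 3) \<le> real (cP (Suc j))" using c C key by linarith
  also have "cP (Suc j) \<le> max_induced 3 P3 N"
    using le_trans[OF FP_le_count[of "Suc j"] count_le_max[OF itE_orgraph, of 3 P3 "4^Suc j"]] FP_card[of "Suc j"]
    unfolding N_def by simp
  then have "real (cP (Suc j)) \<le> real (max_induced 3 P3 N)" by (simp only: of_nat_le_iff)
  finally have "2/5 \<le> real (max_induced 3 P3 N) / real (N choose 3)"
    using Cpos by (simp add: pos_le_divide_eq)
  then show ?thesis unfolding N_def by simp
qed

lemma ratioC: "ereal (2/21) \<le> ereal (real (max_induced 4 C4 (4^Suc j)) / real ((4^Suc j) choose 4))"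
proof -
  define N where "N = (4::nat)^Suc j"
  have N4: "real N \<ge> 4" unfolding N_def by (simp add: one_le_power)
  have c: "252 * real (cC (Suc j)) + real N = real N ^ 4"
    using arg_cong[OF cC_formula[of "Suc j"], of real] unfolding N_def by simp
  have C: "real (N choose 4) * 24 = real N * (real N - 1) * (real N - 2) * (real N - 3)" by (rule ch4)
  have "real N * (real N - 1) * (real N - 2) * (real N - 3) > 0" using N4 by simp
  then have Cpos: "real (N choose 4) > 0" using C by linarith
  have key: "real N ^ 4 - real N - real N * (real N - 1) * (real N - 2) * (real N - 3)
      = real N * (real N - 1) * (6 * real N - 5)"
    by (simp add: algebra_simps power4_eq_xxxx)
  have "real N * (real N - 1) * (6 * real N - 5) \<ge> 0" using N4 by simp
  then have "2/21 * real (N choose 4) \<le> real (cC (Suc j))" using c C key by linarith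
  also have "cC (Suc j) \<le> max_induced 4 C4 N"
    using le_trans[OF FC_le_count[of "Suc j"] count_le_max[OF itE_orgraph, of 4 C4 "4^Suc j"]] FC_card[of "Suc j"]
    unfolding N_def by simp
  then have "real (cC (Suc j)) \<le> real (max_induced 4 C4 N)" by (simp only: of_nat_le_iff)
  finally have "2/21 \<le> real (max_induced 4 C4 N) / real (N choose 4)"
    using Cpos by (simp add: pos_le_divide_eq)
  then show ?thesis unfolding N_def by simp
qed

lemma limsup_ge_sub:
  fixes f :: "nat \<Rightarrow> ereal"
  assumes "\<And>j. c \<le> f (4^Suc j)"
  shows "c \<le> limsup f"
proof -
  have sm: "strict_mono (\<lambda>j::nat. (4::nat)^Suc j)"
    by (rule strict_monoI) (simp add: power_strict_increasing_iff)
  have "c \<le> limsup (f \<circ> (\<lambda>j. 4^Suc j))"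
    by (rule le_Limsup) (use assms in auto)
  also have "\<dots> \<le> limsup f" by (rule limsup_subseq_mono[OF sm])
  finally show ?thesis .
qed

theorem mainTheorem1:
  shows "inducibility 3 P3 \<ge> ereal (2/5) \<and> inducibility 4 C4 \<ge> ereal (2/21)"
  unfolding inducibility_def
  using limsup_ge_sub[of "ereal (2/5)" "\<lambda>n. ereal (real (max_induced 3 P3 n) / real (n choose 3))", OF ratioP]
        limsup_ge_sub[of "ereal (2/21)" "\<lambda>n. ereal (real (max_induced 4 C4 n) / real (n choose 4))", OF ratioC]
  by blast

end
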